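(* For every tube $\mathcal T$, $\mathrm{fpdim}(\mathcal T)=1$.
   Context: $\Bbbk$ is algebraically closed. A tube (of rank $r\ge1$) is the $\Bbbk$-linear abelian category of finite-dimensional nilpotent representations of the quiver with $r$ vertices forming an oriented cycle (for $r=1$, one vertex with one loop). For a $\Bbbk$-linear abelian category $\mathcal C$: an object $M$ is a brick if $\mathrm{Hom}_{\mathcal C}(M,M)=\Bbbk$; a finite set $\phi=\{X_1,\dots,X_n\}$ of nonzero objects is a brick set if every $X_i$ is a brick and $\dim\mathrm{Hom}_{\mathcal C}(X_i,X_j)=\delta_{ij}$; its adjacency matrix is $C(\phi)=(\dim\mathrm{Ext}^1_{\mathcal C}(X_i,X_j))_{i,j}$; $\rho$ is the spectral radius; $\mathrm{fpdim}(\mathcal C)=\sup\{\rho(C(\phi)):\phi\text{ a brick set}\}$. *)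

theory Defs
  imports "HOL-Computational_Algebra.Polynomial" "HOL-Library.Function_Algebras"
    "Jordan_Normal_Form.Spectral_Radius" "HOL-Library.Extended_Real"
begin

text \<open>A representation of the cyclic quiver with r vertices 0,...,r-1 and arrows
  i -> (i+1) mod r (for r = 1: one loop). It is given by dimensions d i and
  matrices A i (entry A i a b, row a < d ((i+1) mod r), column b < d i),
  i.e. A i : k^(d i) -> k^(d ((i+1) mod r)). Linear maps are represented by
  finitely supported functions nat => nat => 'k.\<close>

type_synonym 'k qrep = "(nat \<Rightarrow> nat) \<times> (nat \<Rightarrow> nat \<Rightarrow> nat \<Rightarrow> 'k)"

definition nxt :: "nat \<Rightarrow> nat \<Rightarrow> nat" where
  "nxt r i = Suc i mod r"

definition mmul :: "nat \<Rightarrow> (nat \<Rightarrow> nat \<Rightarrow> 'k::field) \<Rightarrow> (nat \<Rightarrow> nat \<Rightarrow> 'k) \<Rightarrow> nat \<Rightarrow> nat \<Rightarrow> 'k" where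
  "mmul n X Y = (\<lambda>a c. \<Sum>b<n. X a b * Y b c)"

definition supp_in :: "nat \<Rightarrow> nat \<Rightarrow> (nat \<Rightarrow> nat \<Rightarrow> 'k::zero) \<Rightarrow> bool" where
  "supp_in m n X \<longleftrightarrow> (\<forall>a b. (a \<ge> m \<or> b \<ge> n) \<longrightarrow> X a b = 0)"

fun pth :: "nat \<Rightarrow> 'k::field qrep \<Rightarrow> nat \<Rightarrow> nat \<Rightarrow> nat \<Rightarrow> nat \<Rightarrow> 'k" where
  "pth r M i 0 = (\<lambda>a b. if a = b \<and> a < fst M i then 1 else 0)"
| "pth r M i (Suc n) = mmul (fst M ((i + n) mod r)) (snd M ((i + n) mod r)) (pth r M i n)"

definition is_rep :: "nat \<Rightarrow> 'k::field qrep \<Rightarrow> bool" where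
  "is_rep r M \<longleftrightarrow> (\<forall>i\<ge>r. fst M i = 0 \<and> snd M i = (\<lambda>_ _. 0)) \<and>
     (\<forall>i<r. supp_in (fst M (nxt r i)) (fst M i) (snd M i))"

text \<open>objects of the tube of rank r: finite-dimensional nilpotent representations\<close>
definition tube_obj :: "nat \<Rightarrow> 'k::field qrep \<Rightarrow> bool" where
  "tube_obj r M \<longleftrightarrow> is_rep r M \<and> (\<exists>N. \<forall>i<r. pth r M i N = (\<lambda>_ _. 0))"

definition nonzero_rep :: "nat \<Rightarrow> 'k::field qrep \<Rightarrow> bool" where
  "nonzero_rep r M \<longleftrightarrow> (\<exists>i<r. fst M i > 0)"

definition fsc :: "'k::field \<Rightarrow> (nat \<Rightarrow> nat \<Rightarrow> nat \<Rightarrow> 'k) \<Rightarrow> (nat \<Rightarrow> nat \<Rightarrow> nat \<Rightarrow> 'k)" where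
  "fsc c g = (\<lambda>i a b. c * g i a b)"

definition dimk :: "(nat \<Rightarrow> nat \<Rightarrow> nat \<Rightarrow> 'k::field) set \<Rightarrow> nat" where
  "dimk S = Vector_Spaces.vector_space.dim fsc S"

text \<open>families of k-linear maps M_i -> N_i (vertexwise), the domain of the standard
  map whose kernel is Hom and whose cokernel is Ext^1\<close>
definition vmaps :: "nat \<Rightarrow> 'k::field qrep \<Rightarrow> 'k qrep \<Rightarrow> (nat \<Rightarrow> nat \<Rightarrow> nat \<Rightarrow> 'k) set" where
  "vmaps r M N = {g. (\<forall>i\<ge>r. g i = (\<lambda>_ _. 0)) \<and> (\<forall>i<r. supp_in (fst N i) (fst M i) (g i))}"

definition amaps :: "nat \<Rightarrow> 'k::field qrep \<Rightarrow> 'k qrep \<Rightarrow> (nat \<Rightarrow> nat \<Rightarrow> nat \<Rightarrow> 'k) set" where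
  "amaps r M N = {h. (\<forall>i\<ge>r. h i = (\<lambda>_ _. 0)) \<and> (\<forall>i<r. supp_in (fst N (nxt r i)) (fst M i) (h i))}"

definition delta :: "nat \<Rightarrow> 'k::field qrep \<Rightarrow> 'k qrep \<Rightarrow> (nat \<Rightarrow> nat \<Rightarrow> nat \<Rightarrow> 'k) \<Rightarrow> (nat \<Rightarrow> nat \<Rightarrow> nat \<Rightarrow> 'k)" where
  "delta r M N g = (\<lambda>i. if i < r then
      (\<lambda>a b. mmul (fst M (nxt r i)) (g (nxt r i)) (snd M i) a b - mmul (fst N i) (snd N i) (g i) a b)
    else (\<lambda>_ _. 0))"

definition homs :: "nat \<Rightarrow> 'k::field qrep \<Rightarrow> 'k qrep \<Rightarrow> (nat \<Rightarrow> nat \<Rightarrow> nat \<Rightarrow> 'k) set" where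
  "homs r M N = {g \<in> vmaps r M N. delta r M N g = (\<lambda>_ _ _. 0)}"

definition dim_hom :: "nat \<Rightarrow> 'k::field qrep \<Rightarrow> 'k qrep \<Rightarrow> nat" where
  "dim_hom r M N = dimk (homs r M N)"

text \<open>Ext^1(M,N) = cokernel of delta : vmaps -> amaps (standard projective resolution)\<close>
definition dim_ext :: "nat \<Rightarrow> 'k::field qrep \<Rightarrow> 'k qrep \<Rightarrow> nat" where
  "dim_ext r M N = dimk (amaps r M N) - dimk (delta r M N ` vmaps r M N)"

definition is_brick :: "nat \<Rightarrow> 'k::field qrep \<Rightarrow> bool" where
  "is_brick r M \<longleftrightarrow> dim_hom r M M = 1"

text \<open>a brick set {X_1,...,X_n}, listed as a nonempty list\<close>
definition brick_set :: "nat \<Rightarrow> 'k::field qrep list \<Rightarrow> bool" where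
  "brick_set r Xs \<longleftrightarrow> Xs \<noteq> [] \<and>
     (\<forall>X\<in>set Xs. tube_obj r X \<and> nonzero_rep r X \<and> is_brick r X) \<and>
     (\<forall>i<length Xs. \<forall>j<length Xs. dim_hom r (Xs!i) (Xs!j) = (if i = j then 1 else 0))"

definition adj_mat :: "nat \<Rightarrow> 'k::field qrep list \<Rightarrow> complex mat" where
  "adj_mat r Xs = mat (length Xs) (length Xs) (\<lambda>(i,j). of_nat (dim_ext r (Xs!i) (Xs!j)))"

definition fpdim_tube :: "'k::field itself \<Rightarrow> nat \<Rightarrow> ereal" where
  "fpdim_tube _ r = (SUP Xs \<in> {Xs :: 'k qrep list. brick_set r Xs}. ereal (spectral_radius (adj_mat r Xs)))"

end

theory Submission
  imports Defs
begin


lemma vs_fsc: "vector_space (fsc :: 'k::field \<Rightarrow> (nat \<Rightarrow> nat \<Rightarrow> nat \<Rightarrow> 'k) \<Rightarrow> _)"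
  by unfold_locales (auto simp: fsc_def fun_eq_iff algebra_simps)

interpretation fv: vector_space "fsc :: 'k::field \<Rightarrow> (nat \<Rightarrow> nat \<Rightarrow> nat \<Rightarrow> 'k) \<Rightarrow> _"
  by (rule vs_fsc)

lemma dimk_eq: "dimk S = fv.dim S" unfolding dimk_def by simp

lemma sum_fun_apply3: "finite T \<Longrightarrow> (sum h T :: nat \<Rightarrow> nat \<Rightarrow> nat \<Rightarrow> 'k::field) i a b = (\<Sum>v\<in>T. h v i a b)"
  by (induction T rule: finite_induct) auto

definition Ebas :: "nat \<times> nat \<times> nat \<Rightarrow> nat \<Rightarrow> nat \<Rightarrow> nat \<Rightarrow> 'k::field" where
  "Ebas p = (\<lambda>i a b. if (i,a,b) = p then 1 else 0)"

definition Sfun :: "(nat \<times> nat \<times> nat) set \<Rightarrow> (nat \<Rightarrow> nat \<Rightarrow> nat \<Rightarrow> 'k::field) set" where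
  "Sfun P = {g. \<forall>i a b. (i,a,b) \<notin> P \<longrightarrow> g i a b = 0}"

lemma Ebas_inj: "inj (Ebas :: _ \<Rightarrow> _ \<Rightarrow> _ \<Rightarrow> _ \<Rightarrow> 'k::field)"
proof (rule injI)
  fix p q assume "(Ebas p :: _ \<Rightarrow> _ \<Rightarrow> _ \<Rightarrow> 'k) = Ebas q"
  then have "(Ebas p :: _ \<Rightarrow> _ \<Rightarrow> _ \<Rightarrow> 'k) (fst p) (fst (snd p)) (snd (snd p)) = Ebas q (fst p) (fst (snd p)) (snd (snd p))" by simp
  then show "p = q" by (auto simp: Ebas_def split: if_splits)
qed

lemma Ebas_indep: "finite P \<Longrightarrow> fv.independent ((Ebas :: _ \<Rightarrow> _ \<Rightarrow> _ \<Rightarrow> _ \<Rightarrow> 'k::field) ` P)"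
proof -
  assume fP: "finite P"
  show ?thesis
  proof
    assume "fv.dependent ((Ebas :: _ \<Rightarrow> _ \<Rightarrow> _ \<Rightarrow> _ \<Rightarrow> 'k::field) ` P)"
    then obtain u where u: "\<exists>v\<in>Ebas ` P. u v \<noteq> 0" and s: "(\<Sum>v\<in>(Ebas :: _ \<Rightarrow> _ \<Rightarrow> _ \<Rightarrow> _ \<Rightarrow> 'k) ` P. fsc (u v) v) = 0"
      using fv.dependent_finite[of "Ebas ` P"] fP by auto
    from u obtain p where p: "p \<in> P" "u (Ebas p) \<noteq> 0" by auto
    obtain i a b where pe: "p = (i,a,b)" by (cases p) auto
    have "0 = (\<Sum>v\<in>(Ebas :: _ \<Rightarrow> _ \<Rightarrow> _ \<Rightarrow> _ \<Rightarrow> 'k) ` P. fsc (u v) v) i a b" using s by simp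
    also have "\<dots> = (\<Sum>v\<in>(Ebas :: _ \<Rightarrow> _ \<Rightarrow> _ \<Rightarrow> _ \<Rightarrow> 'k) ` P. u v * v i a b)"
      using fP by (simp add: sum_fun_apply3 fsc_def)
    also have "\<dots> = (\<Sum>q\<in>P. u (Ebas q) * (Ebas q :: _ \<Rightarrow> _ \<Rightarrow> _ \<Rightarrow> 'k) i a b)"
      by (subst sum.reindex) (auto intro: inj_on_subset[OF Ebas_inj])
    also have "\<dots> = (\<Sum>q\<in>P. if q = p then u (Ebas p) else 0)"
      by (rule sum.cong) (auto simp: Ebas_def pe)
    also have "\<dots> = u (Ebas p)" using fP p by simp
    finally show False using p by simp
  qed
qed

lemma Sfun_span: "finite P \<Longrightarrow> Sfun P \<subseteq> fv.span ((Ebas :: _ \<Rightarrow> _ \<Rightarrow> _ \<Rightarrow> _ \<Rightarrow> 'k::field) ` P)"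
proof
  fix g :: "nat \<Rightarrow> nat \<Rightarrow> nat \<Rightarrow> 'k" assume fP: "finite P" and g: "g \<in> Sfun P"
  have "g = (\<Sum>p\<in>P. fsc (g (fst p) (fst (snd p)) (snd (snd p))) (Ebas p))"
  proof (intro ext)
    fix i a b
    have "(\<Sum>p\<in>P. fsc (g (fst p) (fst (snd p)) (snd (snd p))) (Ebas p)) i a b
        = (\<Sum>p\<in>P. fsc (g (fst p) (fst (snd p)) (snd (snd p))) (Ebas p) i a b)"
      using fP by (simp add: sum_fun_apply3)
    also have "\<dots> = (\<Sum>p\<in>P. if p = (i,a,b) then g i a b else 0)"
      by (rule sum.cong) (auto simp: fsc_def Ebas_def)
    also have "\<dots> = g i a b" using fP g by (auto simp: Sfun_def)
    finally show "g i a b = (\<Sum>p\<in>P. fsc (g (fst p) (fst (snd p)) (snd (snd p))) (Ebas p)) i a b" by simp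
  qed
  also have "\<dots> \<in> fv.span (Ebas ` P)"
    by (intro fv.span_sum fv.span_scale fv.span_base) auto
  finally show "g \<in> fv.span (Ebas ` P)" .
qed

lemma Ebas_in: "(Ebas :: _ \<Rightarrow> _ \<Rightarrow> _ \<Rightarrow> _ \<Rightarrow> 'k::field) ` P \<subseteq> Sfun P"
  by (auto simp: Ebas_def Sfun_def)

lemma dim_Sfun: "finite P \<Longrightarrow> fv.dim (Sfun P :: (nat \<Rightarrow> nat \<Rightarrow> nat \<Rightarrow> 'k::field) set) = card P"
  using fv.dim_unique[OF Ebas_in Sfun_span Ebas_indep] card_image[OF inj_on_subset[OF Ebas_inj]]
  by (metis subset_UNIV)

lemma Sfun_subspace: "fv.subspace (Sfun P :: (nat \<Rightarrow> nat \<Rightarrow> nat \<Rightarrow> 'k::field) set)"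
  by (auto simp: fv.subspace_def Sfun_def fsc_def)



context vector_space begin
lemma span_disjoint_zero:
  assumes B: "independent B" "finite B" and CD: "C \<subseteq> B" "D \<subseteq> B" "C \<inter> D = {}"
    and x: "x \<in> span C" "x \<in> span D"
  shows "x = 0"
proof -
  have fC: "finite C" using B(2) CD(1) finite_subset by blast
  have fD: "finite D" using B(2) CD(2) finite_subset by blast
  obtain u where u: "x = (\<Sum>v\<in>C. u v *s v)" using x(1) span_finite[OF fC] by auto
  obtain w where w: "x = (\<Sum>v\<in>D. w v *s v)" using x(2) span_finite[OF fD] by auto
  define h where "h v = (if v \<in> C then u v else if v \<in> D then - w v else 0)" for v
  have "(\<Sum>v\<in>B. h v *s v) = (\<Sum>v\<in>C \<union> D. h v *s v)"
    by (rule sum.mono_neutral_right) (use B CD in \<open>auto simp: h_def\<close>)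
  also have "\<dots> = (\<Sum>v\<in>C. h v *s v) + (\<Sum>v\<in>D. h v *s v)"
    by (rule sum.union_disjoint) (use fC fD CD in auto)
  also have "(\<Sum>v\<in>C. h v *s v) = x" unfolding u by (rule sum.cong) (auto simp: h_def)
  also have "(\<Sum>v\<in>D. h v *s v) = - x" unfolding w sum_negf[symmetric]
    by (rule sum.cong) (use CD in \<open>auto simp: h_def\<close>)
  finally have "(\<Sum>v\<in>B. h v *s v) = 0" by simp
  then have "\<forall>v\<in>B. h v = 0" using B independent_explicit_finite_subsets by blast
  then have hz: "\<forall>v\<in>B. h v = 0" .
  have "\<forall>v\<in>C. u v = 0"
  proof
    fix v assume v: "v \<in> C"
    then have "h v = 0" using hz CD(1) by blast
    then show "u v = 0" using v by (simp add: h_def)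
  qed
  then show ?thesis unfolding u by simp
qed
end

lemma rank_nullity_fv:
  fixes f :: "(nat\<Rightarrow>nat\<Rightarrow>nat\<Rightarrow>'k::field) \<Rightarrow> (nat\<Rightarrow>nat\<Rightarrow>nat\<Rightarrow>'k)"
  assumes lin: "Vector_Spaces.linear fsc fsc f" and V: "fv.subspace V" and W: "finite W" "V \<subseteq> fv.span W"
  shows "fv.dim {x\<in>V. f x = 0} + fv.dim (f ` V) = fv.dim V"
proof -
  interpret lf: Vector_Spaces.linear fsc fsc f by (rule lin)
  define K where "K = {x\<in>V. f x = 0}"
  obtain BK where BK: "BK \<subseteq> K" "fv.independent BK" "K \<subseteq> fv.span BK" "card BK = fv.dim K"
    using fv.basis_exists[of K] by blast
  have "BK \<subseteq> V" using BK(1) by (auto simp: K_def)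
  then obtain B where B: "BK \<subseteq> B" "B \<subseteq> V" "fv.independent B" "V \<subseteq> fv.span B"
    using fv.maximal_independent_subset_extend[of BK V] BK(2) by blast
  have fB: "finite B" using fv.independent_span_bound[OF W(1) B(3)] B(2) W(2) by auto
  have cB: "card B = fv.dim V" using fv.basis_card_eq_dim[OF B(2) B(4) B(3)] .
  define C where "C = B - BK"
  have spC: "fv.span C \<subseteq> V" using B(2) V fv.span_minimal[of C V] by (auto simp: C_def)
  have inj: "inj_on f (fv.span C)"
  proof (subst lf.inj_on_iff_eq_0[OF fv.subspace_span], intro ballI impI)
    fix x assume x: "x \<in> fv.span C" "f x = 0"
    then have "x \<in> K" using spC by (auto simp: K_def)
    then have "x \<in> fv.span BK" using BK(3) by auto
    then show "x = 0" using fv.span_disjoint_zero[OF B(3) fB, of C BK x] x B(1)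
      by (auto simp: C_def)
  qed
  have indC: "fv.independent (f ` C)"
    using lf.independent_injective_image[OF fv.independent_mono[OF B(3)] inj] by (auto simp: C_def)
  have injC: "inj_on f C" using inj_on_subset[OF inj fv.span_superset] .
  have "f ` V \<subseteq> fv.span (f ` C)"
  proof
    fix y assume "y \<in> f ` V"
    then obtain x where x: "x \<in> V" "y = f x" by auto
    have "f ` B \<subseteq> insert 0 (f ` C)" using B(1) BK(1) by (auto simp: C_def K_def)
    then have "fv.span (f ` B) \<subseteq> fv.span (f ` C)"
      using fv.span_mono[of "f ` B" "insert 0 (f ` C)"] by simp
    moreover have "y \<in> fv.span (f ` B)" using x B(4) lf.span_image by auto
    ultimately show "y \<in> fv.span (f ` C)" by auto
  qed
  moreover have "f ` C \<subseteq> f ` V" using B(2) by (auto simp: C_def)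
  then have "f ` C \<subseteq> fv.span (f ` V)" using fv.span_superset[of "f ` V"] by (rule order_trans)
  ultimately have "fv.span (f ` V) = fv.span (f ` C)" by (rule fv.span_eq[THEN iffD2, OF conjI])
  then have "fv.dim (f ` V) = fv.dim (f ` C)" using fv.span_eq_dim by blast
  also have "\<dots> = card (f ` C)" using fv.dim_eq_card_independent[OF indC] .
  also have "\<dots> = card C" using card_image[OF injC] .
  also have "\<dots> = card B - card BK" unfolding C_def using B(1) fB finite_subset card_Diff_subset by metis
  finally show ?thesis using BK(4) cB K_def card_mono[OF fB B(1)] by simp
qed



lemma nxt_lt: "r \<ge> 1 \<Longrightarrow> nxt r i < r" by (simp add: nxt_def)

definition Pv :: "nat \<Rightarrow> (nat \<Rightarrow> nat) \<Rightarrow> (nat \<Rightarrow> nat) \<Rightarrow> (nat \<times> nat \<times> nat) set" where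
  "Pv r m n = {(i,a,b). i < r \<and> a < n i \<and> b < m i}"

lemma Pv_Sigma: "Pv r m n = Sigma {..<r} (\<lambda>i. {..<n i} \<times> {..<m i})"
  by (auto simp: Pv_def)

lemma card_Pv: "card (Pv r m n) = (\<Sum>i<r. m i * n i)"
  unfolding Pv_Sigma by (simp add: card_cartesian_product mult.commute)

lemma finite_Pv: "finite (Pv r m n)"
  unfolding Pv_Sigma by auto

lemma vmaps_Sfun: "vmaps r M N = Sfun (Pv r (fst M) (fst N))"
  unfolding vmaps_def Sfun_def Pv_def supp_in_def
  by (auto simp: fun_eq_iff not_less) (meson not_less)+

lemma amaps_Sfun: "amaps r M N = Sfun (Pv r (fst M) (\<lambda>i. fst N (nxt r i)))"
  unfolding amaps_def Sfun_def Pv_def supp_in_def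
  by (auto simp: fun_eq_iff not_less) (meson not_less)+

lemma delta_linear: "Vector_Spaces.linear fsc fsc (delta r M N :: _ \<Rightarrow> _ \<Rightarrow> _ \<Rightarrow> _ \<Rightarrow> 'k::field)"
proof -
  have add: "delta r M N (g + h) = delta r M N g + delta r M N h" for g h :: "nat \<Rightarrow> nat \<Rightarrow> nat \<Rightarrow> 'k"
    by (auto simp: delta_def mmul_def fun_eq_iff algebra_simps sum.distrib)
  have sc: "delta r M N (fsc c g) = fsc c (delta r M N g)" for c and g :: "nat \<Rightarrow> nat \<Rightarrow> nat \<Rightarrow> 'k"
    by (auto simp: delta_def mmul_def fun_eq_iff fsc_def algebra_simps sum_distrib_left)
  show ?thesis unfolding Vector_Spaces.linear_iff using vs_fsc add sc by blast
qed

lemma delta_in_amaps: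
  assumes r: "r \<ge> 1" and M: "is_rep r M" and N: "is_rep r N" and g: "g \<in> vmaps r M N"
  shows "delta r M N g \<in> amaps r M N"
  unfolding amaps_def
proof (intro CollectI conjI allI impI)
  fix i :: nat assume "r \<le> i" then show "delta r M N g i = (\<lambda>_ _. 0)" by (simp add: delta_def)
next
  fix i assume i: "i < r"
  have gn: "supp_in (fst N (nxt r i)) (fst M (nxt r i)) (g (nxt r i))" using g nxt_lt[OF r] by (auto simp: vmaps_def)
  have gi: "supp_in (fst N i) (fst M i) (g i)" using g i by (auto simp: vmaps_def)
  have Mi: "supp_in (fst M (nxt r i)) (fst M i) (snd M i)" using M i by (auto simp: is_rep_def)
  have Ni: "supp_in (fst N (nxt r i)) (fst N i) (snd N i)" using N i by (auto simp: is_rep_def)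
  show "supp_in (fst N (nxt r i)) (fst M i) (delta r M N g i)"
    unfolding supp_in_def
  proof (intro allI impI)
    fix a b assume ab: "fst N (nxt r i) \<le> a \<or> fst M i \<le> b"
    show "delta r M N g i a b = 0"
      using ab gn gi Mi Ni i unfolding supp_in_def delta_def mmul_def by auto
  qed
qed

lemma homs_eq: "homs r M N = {g \<in> vmaps r M N. delta r M N g = 0}"
  by (simp add: homs_def zero_fun_def)

lemma euler:
  assumes r: "r \<ge> 1" and M: "is_rep r M" and N: "is_rep r N"
  shows "int (dim_hom r M N) - int (dim_ext r M N :: nat)
     = int (\<Sum>i<r. fst M i * fst N i) - int (\<Sum>i<r. fst M i * fst N (nxt r i))"
proof -
  let ?V = "vmaps r M N :: (nat \<Rightarrow> nat \<Rightarrow> nat \<Rightarrow> 'a::field) set"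
  let ?A = "amaps r M N :: (nat \<Rightarrow> nat \<Rightarrow> nat \<Rightarrow> 'a::field) set"
  have rn: "fv.dim (homs r M N) + fv.dim (delta r M N ` ?V) = fv.dim ?V"
    unfolding homs_eq
    unfolding vmaps_Sfun
    by (rule rank_nullity_fv[OF delta_linear Sfun_subspace finite_imageI[OF finite_Pv] Sfun_span[OF finite_Pv]])
  have dV: "fv.dim ?V = (\<Sum>i<r. fst M i * fst N i)"
    by (simp add: vmaps_Sfun dim_Sfun finite_Pv card_Pv)
  have dA: "fv.dim ?A = (\<Sum>i<r. fst M i * fst N (nxt r i))"
    by (simp add: amaps_Sfun dim_Sfun finite_Pv card_Pv)
  have sub: "delta r M N ` ?V \<subseteq> fv.span (Ebas ` Pv r (fst M) (\<lambda>i. fst N (nxt r i)))"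
  proof
    fix y assume "y \<in> delta r M N ` ?V"
    then obtain g where g: "g \<in> ?V" "y = delta r M N g" by auto
    then have "y \<in> Sfun (Pv r (fst M) (\<lambda>i. fst N (nxt r i)))"
      using delta_in_amaps[OF r M N g(1)] by (simp add: amaps_Sfun)
    then show "y \<in> fv.span (Ebas ` Pv r (fst M) (\<lambda>i. fst N (nxt r i)))"
      using Sfun_span[OF finite_Pv] by blast
  qed
  have "fv.dim (delta r M N ` ?V) \<le> card (Ebas ` Pv r (fst M) (\<lambda>i. fst N (nxt r i)) :: (nat \<Rightarrow> nat \<Rightarrow> nat \<Rightarrow> 'a) set)"
    by (rule fv.dim_le_card[OF sub]) (simp add: finite_Pv)
  also have "\<dots> \<le> card (Pv r (fst M) (\<lambda>i. fst N (nxt r i)))" by (rule card_image_le[OF finite_Pv])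
  finally have le: "fv.dim (delta r M N ` ?V) \<le> fv.dim ?A"
    by (simp add: amaps_Sfun dim_Sfun finite_Pv)
  show ?thesis
  proof -
    have e1: "int (fv.dim (homs r M N)) + int (fv.dim (delta r M N ` ?V)) = int (\<Sum>i<r. fst M i * fst N i)"
      using rn dV by (metis of_nat_add)
    have e2: "int (fv.dim ?A - fv.dim (delta r M N ` ?V)) = int (fv.dim ?A) - int (fv.dim (delta r M N ` ?V))"
      using le by (simp add: of_nat_diff)
    have e3: "int (dim_ext r M N) = int (fv.dim ?A) - int (fv.dim (delta r M N ` ?V))"
      unfolding dim_ext_def dimk_eq using e2 .
    have e4: "int (fv.dim ?A) = int (\<Sum>i<r. fst M i * fst N (nxt r i))" using dA by simp
    have e5: "int (dim_hom r M N) = int (fv.dim (homs r M N))" unfolding dim_hom_def dimk_eq ..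
    show ?thesis using e1 e3 e4 e5 by linarith
  qed
qed



lemma nxt_bij: assumes r: "r \<ge> 1" shows "bij_betw (nxt r) {..<r} {..<r}"
proof -
  have inj: "inj_on (nxt r) {..<r}"
  proof (rule inj_onI)
    fix i j assume ij: "i \<in> {..<r}" "j \<in> {..<r}" "nxt r i = nxt r j"
    have ei: "nxt r i = (if Suc i = r then 0 else Suc i)" using ij(1) by (auto simp: nxt_def)
    have ej: "nxt r j = (if Suc j = r then 0 else Suc j)" using ij(2) by (auto simp: nxt_def)
    show "i = j" using ij ei ej by (auto split: if_splits)
  qed
  have "nxt r ` {..<r} \<subseteq> {..<r}" using nxt_lt[OF r] by auto
  then have "nxt r ` {..<r} = {..<r}" using endo_inj_surj[OF finite_lessThan _ inj] by blast
  then show ?thesis using inj by (simp add: bij_betw_def)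
qed

lemma quad_nonneg:
  fixes w :: "nat \<Rightarrow> real" assumes r: "r \<ge> 1"
  shows "(\<Sum>k<r. w k * w (nxt r k)) \<le> (\<Sum>k<r. w k * w k)"
proof -
  have "(\<Sum>k<r. w (nxt r k) * w (nxt r k)) = (\<Sum>k<r. w k * w k)"
    using sum.reindex_bij_betw[OF nxt_bij[OF r], of "\<lambda>k. w k * w k"] by simp
  moreover have "(\<Sum>k<r. w k * w (nxt r k)) \<le> (\<Sum>k<r. (w k * w k + w (nxt r k) * w (nxt r k)) / 2)"
  proof (rule sum_mono)
    fix k show "w k * w (nxt r k) \<le> (w k * w k + w (nxt r k) * w (nxt r k)) / 2"
      using sum_squares_ge_zero[of "w k - w (nxt r k)" 0] by (simp add: algebra_simps power2_eq_square)
  qed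
  moreover have "(\<Sum>k<r. (w k * w k + w (nxt r k) * w (nxt r k)) / 2)
      = ((\<Sum>k<r. w k * w k) + (\<Sum>k<r. w (nxt r k) * w (nxt r k))) / 2"
    by (simp add: sum.distrib flip: sum_divide_distrib)
  ultimately show ?thesis by (simp only:) simp
qed

lemma bilin:
  fixes u :: "nat \<Rightarrow> real" and x :: "nat \<Rightarrow> nat \<Rightarrow> real"
  shows "(\<Sum>i<n. \<Sum>j<n. u i * u j * (\<Sum>k<r. x i k * x j k - x i k * x j (s k)))
       = (\<Sum>k<r. (\<Sum>i<n. u i * x i k) * (\<Sum>j<n. u j * x j k) - (\<Sum>i<n. u i * x i k) * (\<Sum>j<n. u j * x j (s k)))"
proof -
  have "(\<Sum>i<n. \<Sum>j<n. u i * u j * (\<Sum>k<r. x i k * x j k - x i k * x j (s k)))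
      = (\<Sum>i<n. \<Sum>j<n. \<Sum>k<r. u i * x i k * (u j * x j k) - u i * x i k * (u j * x j (s k)))"
    by (simp add: sum_distrib_left algebra_simps)
  also have "\<dots> = (\<Sum>i<n. \<Sum>k<r. \<Sum>j<n. u i * x i k * (u j * x j k) - u i * x i k * (u j * x j (s k)))"
    by (rule sum.cong[OF refl], rule sum.swap)
  also have "\<dots> = (\<Sum>k<r. \<Sum>i<n. \<Sum>j<n. u i * x i k * (u j * x j k) - u i * x i k * (u j * x j (s k)))"
    by (rule sum.swap)
  also have "\<dots> = (\<Sum>k<r. (\<Sum>i<n. u i * x i k) * (\<Sum>j<n. u j * x j k) - (\<Sum>i<n. u i * x i k) * (\<Sum>j<n. u j * x j (s k)))"
    by (simp add: sum_product sum_subtractf)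
  finally show ?thesis .
qed



lemma entry:
  assumes r: "r \<ge> 1" and B: "brick_set r Xs" and i: "i < length Xs" and j: "j < length Xs"
  shows "real (dim_ext r (Xs!i) (Xs!j)) = (if i = j then 1 else 0)
     - (\<Sum>k<r. real (fst (Xs!i) k) * real (fst (Xs!j) k) - real (fst (Xs!i) k) * real (fst (Xs!j) (nxt r k)))"
proof -
  have Mi: "is_rep r (Xs!i)" using B i nth_mem[OF i] by (auto simp: brick_set_def tube_obj_def)
  have Mj: "is_rep r (Xs!j)" using B j nth_mem[OF j] by (auto simp: brick_set_def tube_obj_def)
  have h: "dim_hom r (Xs!i) (Xs!j) = (if i = j then 1 else 0)" using B i j by (auto simp: brick_set_def)
  have e: "int (dim_hom r (Xs!i) (Xs!j)) - int (dim_ext r (Xs!i) (Xs!j))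
     = int (\<Sum>k<r. fst (Xs!i) k * fst (Xs!j) k) - int (\<Sum>k<r. fst (Xs!i) k * fst (Xs!j) (nxt r k))"
    by (rule euler[OF r Mi Mj])
  have "int (dim_ext r (Xs!i) (Xs!j)) = int (if i = j then 1 else 0)
     - (int (\<Sum>k<r. fst (Xs!i) k * fst (Xs!j) k) - int (\<Sum>k<r. fst (Xs!i) k * fst (Xs!j) (nxt r k)))"
    using e h by linarith
  then have "real_of_int (int (dim_ext r (Xs!i) (Xs!j))) = real_of_int (int (if i = j then 1 else 0)
     - (int (\<Sum>k<r. fst (Xs!i) k * fst (Xs!j) k) - int (\<Sum>k<r. fst (Xs!i) k * fst (Xs!j) (nxt r k))))"
    by simp
  then show ?thesis by (simp add: sum_subtractf)
qed

lemma sr_le1: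
  assumes r: "r \<ge> 1" and B: "brick_set r Xs"
  shows "spectral_radius (adj_mat r Xs) \<le> 1"
proof -
  define n where "n = length Xs"
  define A where "A = adj_mat r Xs"
  have A: "A \<in> carrier_mat n n" by (simp add: A_def adj_mat_def n_def)
  have n: "n > 0" using B by (auto simp: n_def brick_set_def)
  obtain lam where lam: "lam \<in> spectrum A" "spectral_radius A = norm lam"
    using spectral_radius_mem_max(1)[OF A n] by auto
  obtain v where v: "v \<in> carrier_vec n" "v \<noteq> 0\<^sub>v n" "A *\<^sub>v v = lam \<cdot>\<^sub>v v"
    using lam(1) A unfolding spectrum_def eigenvalue_def eigenvector_def by auto
  define c where "c i j = real (dim_ext r (Xs!i) (Xs!j))" for i j
  define u where "u i = cmod (v $ i)" for i
  have u0: "u i \<ge> 0" for i by (simp add: u_def)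
  have row: "cmod lam * u i \<le> (\<Sum>j<n. c i j * u j)" if i: "i < n" for i
  proof -
    have "lam * v $ i = (A *\<^sub>v v) $ i" using v i by simp
    also have "\<dots> = (\<Sum>j<n. of_nat (dim_ext r (Xs!i) (Xs!j)) * v $ j)"
      using i A v(1) by (auto simp: scalar_prod_def A_def adj_mat_def n_def lessThan_atLeast0 intro!: sum.cong)
    finally have "cmod (lam * v $ i) = cmod (\<Sum>j<n. of_nat (dim_ext r (Xs!i) (Xs!j)) * v $ j)" by simp
    also have "\<dots> \<le> (\<Sum>j<n. cmod (of_nat (dim_ext r (Xs!i) (Xs!j)) * v $ j))" by (rule norm_sum)
    also have "\<dots> = (\<Sum>j<n. c i j * u j)" by (simp add: c_def u_def norm_mult)
    finally show ?thesis by (simp add: norm_mult u_def)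
  qed
  define S where "S = (\<Sum>i<n. u i * u i)"
  have Spos: "S > 0"
  proof -
    obtain i where i: "i < n" "v $ i \<noteq> 0" using v(1,2) by (metis carrier_vecD eq_vecI index_zero_vec)
    have "u i * u i > 0" using i by (simp add: u_def)
    moreover have "u i * u i \<le> S" unfolding S_def
      using member_le_sum[of i "{..<n}" "\<lambda>i. u i * u i"] i u0 by auto
    ultimately show ?thesis by linarith
  qed
  have "cmod lam * S = (\<Sum>i<n. u i * (cmod lam * u i))" by (simp add: S_def sum_distrib_left algebra_simps)
  also have "\<dots> \<le> (\<Sum>i<n. u i * (\<Sum>j<n. c i j * u j))"
    by (rule sum_mono) (use row u0 in \<open>auto intro: mult_left_mono\<close>)
  also have "\<dots> = (\<Sum>i<n. \<Sum>j<n. u i * u j * (if i = j then 1 else 0))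
      - (\<Sum>i<n. \<Sum>j<n. u i * u j * (\<Sum>k<r. real (fst (Xs!i) k) * real (fst (Xs!j) k) - real (fst (Xs!i) k) * real (fst (Xs!j) (nxt r k))))"
  proof -
    let ?e = "\<lambda>i j. (\<Sum>k<r. real (fst (Xs!i) k) * real (fst (Xs!j) k) - real (fst (Xs!i) k) * real (fst (Xs!j) (nxt r k)))"
    have "(\<Sum>i<n. u i * (\<Sum>j<n. c i j * u j)) = (\<Sum>i<n. \<Sum>j<n. u i * u j * (if i = j then 1 else 0) - u i * u j * ?e i j)"
    proof (rule sum.cong[OF refl])
      fix i assume i: "i \<in> {..<n}"
      have "u i * (\<Sum>j<n. c i j * u j) = (\<Sum>j<n. u i * (c i j * u j))" by (rule sum_distrib_left)
      also have "\<dots> = (\<Sum>j<n. u i * u j * (if i = j then 1 else 0) - u i * u j * ?e i j)"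
      proof (rule sum.cong[OF refl])
        fix j assume j: "j \<in> {..<n}"
        have "c i j = (if i = j then 1 else 0) - ?e i j" unfolding c_def
          by (rule entry[OF r B]) (use i j in \<open>auto simp: n_def\<close>)
        then show "u i * (c i j * u j) = u i * u j * (if i = j then 1 else 0) - u i * u j * ?e i j"
          by (simp only:) (simp add: algebra_simps)
      qed
      finally show "u i * (\<Sum>j<n. c i j * u j) = (\<Sum>j<n. u i * u j * (if i = j then 1 else 0) - u i * u j * ?e i j)" .
    qed
    also have "\<dots> = (\<Sum>i<n. \<Sum>j<n. u i * u j * (if i = j then 1 else 0)) - (\<Sum>i<n. \<Sum>j<n. u i * u j * ?e i j)"
      by (simp only: sum_subtractf)
    finally show ?thesis .
  qed
  also have "(\<Sum>i<n. \<Sum>j<n. u i * u j * (if i = j then 1 else 0)) = S"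
    unfolding S_def by (rule sum.cong[OF refl]) (simp add: if_distrib cong: if_cong)
  also have "(\<Sum>i<n. \<Sum>j<n. u i * u j * (\<Sum>k<r. real (fst (Xs!i) k) * real (fst (Xs!j) k) - real (fst (Xs!i) k) * real (fst (Xs!j) (nxt r k)))) \<ge> 0"
  proof -
    define w where "w k = (\<Sum>i<n. u i * real (fst (Xs!i) k))" for k
    have "(\<Sum>i<n. \<Sum>j<n. u i * u j * (\<Sum>k<r. real (fst (Xs!i) k) * real (fst (Xs!j) k) - real (fst (Xs!i) k) * real (fst (Xs!j) (nxt r k))))
        = (\<Sum>k<r. w k * w k - w k * w (nxt r k))"
      unfolding w_def by (rule bilin)
    also have "\<dots> = (\<Sum>k<r. w k * w k) - (\<Sum>k<r. w k * w (nxt r k))" by (rule sum_subtractf)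
    finally show ?thesis using quad_nonneg[OF r, of w] by linarith
  qed
  ultimately have "cmod lam * S \<le> S" by linarith
  then have "cmod lam \<le> 1" using Spos by (simp add: mult_le_cancel_right1)
  then show ?thesis using lam(2) by (simp add: A_def)
qed



definition Xr :: "nat \<Rightarrow> 'k::field qrep" where
  "Xr r = ((\<lambda>i. if i < r then 1 else 0), (\<lambda>i a b. if Suc i < r \<and> a = 0 \<and> b = 0 then 1 else 0))"

definition g0 :: "nat \<Rightarrow> nat \<Rightarrow> nat \<Rightarrow> nat \<Rightarrow> 'k::field" where
  "g0 r = (\<lambda>i a b. if i < r \<and> a = 0 \<and> b = 0 then 1 else 0)"

lemma mmul_1: "mmul 1 P Q = (\<lambda>a b. P a 0 * Q 0 b)" "mmul (Suc 0) P Q = (\<lambda>a b. P a 0 * Q 0 b)"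
  by (simp_all add: mmul_def fun_eq_iff)

lemma nxt_Suc: "Suc i < r \<Longrightarrow> nxt r i = Suc i" by (simp add: nxt_def)

lemma Xr_rep: "r \<ge> 1 \<Longrightarrow> is_rep r (Xr r :: 'k::field qrep)"
  by (auto simp: is_rep_def Xr_def supp_in_def nxt_lt fun_eq_iff)

lemma Xr_pth: assumes "i < r" shows "pth r (Xr r :: 'k::field qrep) i n = (\<lambda>a b. if a = 0 \<and> b = 0 \<and> i + n < r then 1 else 0)"
proof (induction n)
  case 0 then show ?case using assms by (auto simp: Xr_def fun_eq_iff)
next
  case (Suc n)
  have r: "(i + n) mod r < r" using assms by simp
  have d: "fst (Xr r :: 'k qrep) ((i + n) mod r) = 1" using r by (simp add: Xr_def)
  show ?case
  proof (cases "i + n < r")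
    case True
    then show ?thesis using Suc d by (auto simp: mmul_1 Xr_def fun_eq_iff)
  next
    case False
    then show ?thesis using Suc d by (auto simp: mmul_1 Xr_def fun_eq_iff)
  qed
qed

lemma Xr_tube: "r \<ge> 1 \<Longrightarrow> tube_obj r (Xr r :: 'k::field qrep)"
  unfolding tube_obj_def using Xr_rep by (auto intro!: exI[of _ r] simp: Xr_pth fun_eq_iff)

lemma Xr_nonzero: "r \<ge> 1 \<Longrightarrow> nonzero_rep r (Xr r :: 'k::field qrep)"
  unfolding nonzero_rep_def Xr_def by (intro exI[of _ 0]) auto

lemma Xr_homs: assumes r: "r \<ge> 1" shows "homs r (Xr r) (Xr r :: 'k::field qrep) = range (\<lambda>c. fsc c (g0 r))"
proof
  show "homs r (Xr r) (Xr r :: 'k qrep) \<subseteq> range (\<lambda>c. fsc c (g0 r))"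
  proof
    fix g assume g: "g \<in> homs r (Xr r) (Xr r :: 'k qrep)"
    have gv: "g \<in> vmaps r (Xr r) (Xr r)" and gd: "delta r (Xr r) (Xr r) g = (\<lambda>_ _ _. 0)"
      using g by (auto simp: homs_def)
    have gi: "\<And>i. i \<ge> r \<Longrightarrow> g i = (\<lambda>_ _. 0)" using gv by (auto simp: vmaps_def)
    have gs: "\<And>i a b. i < r \<Longrightarrow> (a \<noteq> 0 \<or> b \<noteq> 0) \<Longrightarrow> g i a b = 0"
      using gv by (auto simp: vmaps_def supp_in_def Xr_def)
    have step: "g (Suc i) 0 0 = g i 0 0" if i: "Suc i < r" for i
    proof -
      have "delta r (Xr r) (Xr r) g i 0 0 = 0" using gd by simp
      then show ?thesis using i nxt_Suc[OF i] by (simp add: delta_def mmul_1 Xr_def)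
    qed
    have all: "i < r \<Longrightarrow> g i 0 0 = g 0 0 0" for i
      by (induction i) (use step in auto)
    have "g = fsc (g 0 0 0) (g0 r)"
    proof (intro ext)
      fix i a b show "g i a b = fsc (g 0 0 0) (g0 r) i a b"
        using gi[of i] gs[of i a b] all[of i] by (cases "i < r"; cases "a = 0 \<and> b = 0") (auto simp: fsc_def g0_def)
    qed
    then show "g \<in> range (\<lambda>c. fsc c (g0 r))" by blast
  qed
next
  show "range (\<lambda>c. fsc c (g0 r)) \<subseteq> homs r (Xr r) (Xr r :: 'k qrep)"
  proof
    fix g assume "g \<in> range (\<lambda>c. fsc c (g0 r :: _ \<Rightarrow> _ \<Rightarrow> _ \<Rightarrow> 'k))"
    then obtain c where c: "g = fsc c (g0 r)" by auto
    have "g \<in> vmaps r (Xr r) (Xr r :: 'k qrep)" unfolding c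
      by (auto simp: vmaps_def supp_in_def Xr_def fsc_def g0_def fun_eq_iff)
    moreover have "delta r (Xr r) (Xr r :: 'k qrep) g = (\<lambda>_ _ _. 0)"
    proof (intro ext)
      fix i a b
      show "delta r (Xr r) (Xr r :: 'k qrep) g i a b = 0"
      proof (cases "i < r")
        case True
        have "fst (Xr r :: 'k qrep) (nxt r i) = 1" using nxt_lt[OF r] by (simp add: Xr_def)
        moreover have "Suc i < r \<Longrightarrow> nxt r i < r" using nxt_lt[OF r] by simp
        ultimately show ?thesis using True nxt_lt[OF r, of i]
          by (auto simp: delta_def mmul_1 Xr_def c fsc_def g0_def)
      next
        case False then show ?thesis by (simp add: delta_def)
      qed
    qed
    ultimately show "g \<in> homs r (Xr r) (Xr r :: 'k qrep)" by (simp add: homs_def)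
  qed
qed

lemma Xr_hom1: assumes r: "r \<ge> 1" shows "dim_hom r (Xr r) (Xr r :: 'k::field qrep) = 1"
proof -
  have nz: "g0 r \<noteq> (0 :: nat \<Rightarrow> nat \<Rightarrow> nat \<Rightarrow> 'k)"
  proof
    assume "g0 r = (0 :: nat \<Rightarrow> nat \<Rightarrow> nat \<Rightarrow> 'k)"
    then have "g0 r 0 0 0 = (0::'k)" by simp
    then show False using r by (simp add: g0_def)
  qed
  have "dim_hom r (Xr r) (Xr r :: 'k qrep) = fv.dim (fv.span {g0 r :: nat \<Rightarrow> nat \<Rightarrow> nat \<Rightarrow> 'k})"
    unfolding dim_hom_def dimk_eq Xr_homs[OF r] fv.span_singleton ..
  also have "\<dots> = card {g0 r :: nat \<Rightarrow> nat \<Rightarrow> nat \<Rightarrow> 'k}"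
    by (rule fv.dim_span_eq_card_independent) (use nz in simp)
  finally show ?thesis by simp
qed

lemma Xr_ext1: assumes r: "r \<ge> 1" shows "dim_ext r (Xr r) (Xr r :: 'k::field qrep) = 1"
proof -
  have e: "int (dim_hom r (Xr r) (Xr r :: 'k qrep)) - int (dim_ext r (Xr r) (Xr r :: 'k qrep))
     = int (\<Sum>i<r. fst (Xr r :: 'k qrep) i * fst (Xr r :: 'k qrep) i) - int (\<Sum>i<r. fst (Xr r :: 'k qrep) i * fst (Xr r :: 'k qrep) (nxt r i))"
    by (rule euler[OF r Xr_rep[OF r] Xr_rep[OF r]])
  have "(\<Sum>i<r. fst (Xr r :: 'k qrep) i * fst (Xr r :: 'k qrep) (nxt r i)) = (\<Sum>i<r. fst (Xr r :: 'k qrep) i * fst (Xr r :: 'k qrep) i)"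
    by (rule sum.cong) (auto simp: Xr_def nxt_lt[OF r])
  then have "int (dim_hom r (Xr r) (Xr r :: 'k qrep)) - int (dim_ext r (Xr r) (Xr r :: 'k qrep)) = 0"
    using e by simp
  then have "dim_hom r (Xr r) (Xr r :: 'k qrep) = dim_ext r (Xr r) (Xr r :: 'k qrep)" by simp
  then show ?thesis using Xr_hom1[OF r, where 'k='k] by simp
qed

lemma Xr_brick_set: assumes r: "r \<ge> 1" shows "brick_set r [Xr r :: 'k::field qrep]"
  using Xr_tube[OF r] Xr_nonzero[OF r] Xr_hom1[OF r] by (auto simp: brick_set_def is_brick_def)

lemma Xr_sr: assumes r: "r \<ge> 1" shows "spectral_radius (adj_mat r [Xr r :: 'k::field qrep]) \<ge> 1"
proof -
  define A where "A = adj_mat r [Xr r :: 'k qrep]"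
  have A: "A \<in> carrier_mat 1 1" by (simp add: A_def adj_mat_def)
  have Aent: "A $$ (0,0) = 1" using Xr_ext1[OF r] by (simp add: A_def adj_mat_def)
  define v where "v = vec 1 (\<lambda>_. 1 :: complex)"
  have "eigenvector A v 1"
    unfolding eigenvector_def
  proof (intro conjI)
    show "v \<in> carrier_vec (dim_row A)" using A by (simp add: v_def)
    show "v \<noteq> 0\<^sub>v (dim_row A)"
    proof
      assume "v = 0\<^sub>v (dim_row A)"
      then have "v $ 0 = 0\<^sub>v (dim_row A) $ 0" by simp
      then show False using A by (simp add: v_def)
    qed
    show "A *\<^sub>v v = 1 \<cdot>\<^sub>v v"
    proof (rule eq_vecI)
      show "dim_vec (A *\<^sub>v v) = dim_vec (1 \<cdot>\<^sub>v v)" using A by (simp add: v_def)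
      fix i assume "i < dim_vec (1 \<cdot>\<^sub>v v)"
      then have i: "i = 0" by (simp add: v_def)
      show "(A *\<^sub>v v) $ i = (1 \<cdot>\<^sub>v v) $ i"
        using A Aent i by (simp add: v_def scalar_prod_def)
    qed
  qed
  then have "1 \<in> spectrum A" by (auto simp: spectrum_def eigenvalue_def)
  then have "cmod 1 \<in> cmod ` spectrum A" by blast
  then have "norm (1::complex) \<le> spectral_radius A" using spectral_radius_mem_max(2)[OF A] by simp
  then show ?thesis by (simp add: A_def)
qed



theorem corollary5p2:
  fixes r :: nat
  assumes "r \<ge> 1"
  shows "fpdim_tube TYPE('k::alg_closed_field) r = 1"
proof -
  have le: "fpdim_tube TYPE('k) r \<le> 1"
    unfolding fpdim_tube_def
  proof (rule SUP_least)
    fix Xs :: "'k qrep list" assume "Xs \<in> {Xs. brick_set r Xs}"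
    then show "ereal (spectral_radius (adj_mat r Xs)) \<le> 1" using sr_le1[OF assms] by simp
  qed
  have ge: "1 \<le> fpdim_tube TYPE('k) r"
    unfolding fpdim_tube_def
  proof (rule SUP_upper2)
    show "[Xr r :: 'k qrep] \<in> {Xs. brick_set r Xs}" using Xr_brick_set[OF assms] by simp
    show "1 \<le> ereal (spectral_radius (adj_mat r [Xr r :: 'k qrep]))" using Xr_sr[OF assms, where 'k='k] by simp
  qed
  show ?thesis using le ge by (rule antisym)
qed

end
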